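(* Let $\mathcal{S}$ be a finite state space with non-terminal states $\mathcal{S}_N$, let $r:\mathcal{S}\to\mathbb{R}$ satisfy $r(s)<0$ for all $s\in\mathcal{S}_N$, let $\lambda>0$, and let $\mathbf{P}^{\pi_d}$ be the state-transition matrix of the default policy $\pi_d$, with rows of non-terminal states summing to $1$ and rows of terminal states equal to zero. Let $\mathbf{Z}=\big[\operatorname{diag}(\exp(-\mathbf{r}/\lambda))-\mathbf{P}^{\pi_d}\big]^{-1}$ and $\operatorname{Sym}(\mathbf{Z})=(\mathbf{Z}+\mathbf{Z}^\top)/2$. Assume there is exactly one start state $s_0$ and that every state is reachable from $s_0$ under the default policy, i.e. for every $s\in\mathcal{S}$ there is a finite sequence of states $s_0=u_0,u_1,\dots,u_k=s$ with $\prod_{t=0}^{k-1}\mathbf{P}^{\pi_d}(u_t,u_{t+1})>0$. Then the largest eigenvalue of $\operatorname{Sym}(\mathbf{Z})$ is positive and its corresponding (top) eigenvector can be chosen with all entries positive.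
   Context: $\mathbf{P}^{\pi_d}(s,s')$ is the probability of transitioning from $s$ to $s'$ under the default policy $\pi_d$, which assigns nonzero probability to all state-action pairs; $\exp$ acts entrywise. $\mathbf{Z}$ is the default representation (DR). *)

theory Defs
  imports "HOL-Analysis.Analysis"
begin

definition diag_mat :: "real ^ 'n \<Rightarrow> real ^ 'n ^ 'n" where
  "diag_mat d = (\<chi> i j. if i = j then d $ i else 0)"

definition default_rep :: "('n::finite \<Rightarrow> real) \<Rightarrow> real \<Rightarrow> real ^ 'n ^ 'n \<Rightarrow> real ^ 'n ^ 'n" where
  "default_rep r lam P = matrix_inv (diag_mat (\<chi> s. exp (- r s / lam)) - P)"

definition sym_part :: "real ^ 'n ^ 'n \<Rightarrow> real ^ 'n ^ 'n" where
  "sym_part A = (1/2) *\<^sub>R (A + transpose A)"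

definition is_eigenvalue :: "real ^ 'n ^ 'n \<Rightarrow> real \<Rightarrow> bool" where
  "is_eigenvalue A mu \<longleftrightarrow> (\<exists>v. v \<noteq> 0 \<and> A *v v = mu *\<^sub>R v)"

end

theory Submission
  imports Defs
begin


lemma quad_sym:
  fixes S :: "real^'n^'n"
  assumes "transpose S = S"
  shows "w \<bullet> (S *v y) = y \<bullet> (S *v w)"
proof -
  have "y \<bullet> (S *v w) = (y v* S) \<bullet> w" by (simp add: dot_lmul_matrix)
  also have "y v* S = S *v y" by (metis assms transpose_matrix_vector)
  finally show ?thesis by (simp add: inner_commute)
qed

lemma quad_expand:
  fixes S :: "real^'n^'n"
  assumes "transpose S = S"
  shows "(w + t *\<^sub>R y) \<bullet> (S *v (w + t *\<^sub>R y)) =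
     w \<bullet> (S *v w) + 2 * t * (y \<bullet> (S *v w)) + t^2 * (y \<bullet> (S *v y))"
  using quad_sym[OF assms, of w y]
  by (simp add: algebra_simps inner_add_left inner_add_right power2_eq_square)

lemma max_is_eig:
  fixes S :: "real^'n^'n"
  assumes sym: "transpose S = S"
    and R: "\<forall>y. y \<bullet> (S *v y) \<le> mu * (y \<bullet> y)"
    and W: "w \<bullet> (S *v w) = mu * (w \<bullet> w)"
  shows "S *v w = mu *\<^sub>R w"
proof -
  define y where "y = mu *\<^sub>R w - S *v w"
  define g where "g = y \<bullet> y"
  define f where "f = mu * (y \<bullet> y) - y \<bullet> (S *v y)"
  have f0: "f \<ge> 0" using R f_def by auto
  have key: "\<And>t. 0 \<le> 2 * t * g + t^2 * f"
  proof -
    fix t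
    have "(w + t *\<^sub>R y) \<bullet> (S *v (w + t *\<^sub>R y)) \<le> mu * ((w + t *\<^sub>R y) \<bullet> (w + t *\<^sub>R y))"
      using R by blast
    moreover have "y \<bullet> (S *v w) = mu * (y \<bullet> w) - g"
      unfolding g_def y_def by (simp add: inner_diff_right inner_diff_left algebra_simps)
    ultimately show "0 \<le> 2 * t * g + t^2 * f"
      unfolding quad_expand[OF sym] f_def using W
      by (simp add: algebra_simps inner_add_left inner_add_right power2_eq_square inner_commute)
  qed
  define t where "t = - g / (f+1)"
  have gt: "g = - t * (f+1)" using f0 unfolding t_def by (simp add: field_simps)
  have "0 \<le> 2 * t * g + t^2 * f" using key by blast
  also have "\<dots> = (- (t^2)) * (f + 2)" unfolding gt by (simp add: algebra_simps power2_eq_square)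
  finally have "t^2 * (f+2) \<le> 0" by simp
  hence "t^2 \<le> 0" using f0 by (smt (verit) mult_pos_pos zero_le_power2)
  hence "t = 0" by simp
  hence "g = 0" using gt by simp
  hence "y = 0" unfolding g_def by simp
  thus ?thesis unfolding y_def by simp
qed

lemma quad_sum:
  fixes S :: "real^'n^'n"
  shows "y \<bullet> (S *v y) = (\<Sum>i\<in>UNIV. \<Sum>j\<in>UNIV. y$i * S$i$j * y$j)"
  by (simp add: inner_vec_def matrix_vector_mult_def sum_distrib_left mult.assoc)

lemma perron_sym:
  fixes S :: "real^'n^'n" and c :: 'n
  assumes sym: "transpose S = S"
    and nonneg: "\<forall>i j. S$i$j \<ge> 0"
    and pos: "\<forall>i. S$i$c > 0"
  shows "\<exists>mu v. is_eigenvalue S mu \<and> (\<forall>mu'. is_eigenvalue S mu' \<longrightarrow> mu' \<le> mu)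
            \<and> mu > 0 \<and> S *v v = mu *\<^sub>R v \<and> (\<forall>i. v $ i > 0)"
proof -
  define q where "q = (\<lambda>y::real^'n. y \<bullet> (S *v y))"
  have cont: "continuous_on (sphere 0 1) q"
  proof -
    have "continuous_on (sphere 0 1) ((*v) S)"
      by (rule linear_continuous_on[OF matrix_vector_mul_bounded_linear])
    thus ?thesis unfolding q_def by (intro continuous_on_inner continuous_on_id) auto
  qed
  have ne: "axis c 1 \<in> sphere (0::real^'n) 1" by simp
  obtain x where xS: "x \<in> sphere (0::real^'n) 1" and xmax: "\<forall>y\<in>sphere 0 1. q y \<le> q x"
    using continuous_attains_sup[OF compact_sphere _ cont] ne by blast
  define mu where "mu = q x"
  have R: "\<forall>y. y \<bullet> (S *v y) \<le> mu * (y \<bullet> y)"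
  proof
    fix y :: "real^'n"
    show "y \<bullet> (S *v y) \<le> mu * (y \<bullet> y)"
    proof (cases "y = 0")
      case True then show ?thesis by simp
    next
      case False
      hence n: "norm y > 0" by simp
      define z where "z = (1 / norm y) *\<^sub>R y"
      have "z \<in> sphere 0 1" using n unfolding z_def by simp
      hence "q z \<le> mu" using xmax mu_def by blast
      moreover have "q z = (y \<bullet> (S *v y)) / (norm y)^2"
        unfolding q_def z_def by (simp add: matrix_vector_mult_scaleR power2_eq_square)
      moreover have "y \<bullet> y = (norm y)^2" by (simp add: power2_norm_eq_inner)
      ultimately show ?thesis using n by (simp add: divide_le_eq mult.commute)
    qed
  qed
  define w where "w = (\<chi> i. \<bar>x$i\<bar>)"
  have ww: "w \<bullet> w = x \<bullet> x"
    unfolding w_def by (simp add: inner_vec_def)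
  have xx: "x \<bullet> x = 1" using xS by (simp add: dot_square_norm)
  have "q x \<le> q w"
    unfolding q_def quad_sum
  proof (intro sum_mono)
    fix i j
    show "x$i * S$i$j * x$j \<le> w$i * S$i$j * w$j"
    proof -
      have "x$i * S$i$j * x$j \<le> \<bar>x$i * S$i$j * x$j\<bar>" by (rule abs_ge_self)
      also have "\<dots> = \<bar>x$i\<bar> * S$i$j * \<bar>x$j\<bar>" using nonneg by (simp add: abs_mult)
      finally show ?thesis unfolding w_def by simp
    qed
  qed
  moreover have "q w \<le> mu"
  proof -
    have "w \<bullet> (S *v w) \<le> mu * (w \<bullet> w)" using R by blast
    thus ?thesis unfolding q_def using ww xx by simp
  qed
  ultimately have qw: "w \<bullet> (S *v w) = mu * (w \<bullet> w)" using ww xx mu_def q_def by simp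
  have eig: "S *v w = mu *\<^sub>R w" by (rule max_is_eig[OF sym R qw])
  have w0: "w \<noteq> 0" using ww xx by auto
  have wnn: "\<forall>i. w$i \<ge> 0" unfolding w_def by simp
  have "q (axis c 1) \<le> mu" using xmax ne mu_def by blast
  moreover have "q (axis c 1) = S$c$c"
    unfolding q_def by (simp add: matrix_vector_mult_basis inner_axis' column_def)
  ultimately have mupos: "mu > 0" using pos[rule_format, of c] by linarith
  have "\<exists>j. w$j \<noteq> 0" using w0 by (simp add: vec_eq_iff)
  then obtain j where wj: "w$j \<noteq> 0" by blast
  hence wj': "w$j > 0" using wnn by (simp add: order_le_neq_trans)
  have row: "\<And>i k. (S *v w)$i \<ge> S$i$k * w$k"
  proof -
    fix i k
    have "S$i$k * w$k \<le> (\<Sum>l\<in>UNIV. S$i$l * w$l)"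
      by (rule member_le_sum[where f="\<lambda>l. S$i$l * w$l"]) (use nonneg wnn in auto)
    thus "(S *v w)$i \<ge> S$i$k * w$k" by (simp add: matrix_vector_mult_def)
  qed
  have "(transpose S)$c$j = S$c$j" using sym by simp
  hence "S$c$j = S$j$c" by (simp add: transpose_def)
  hence Scj: "S$c$j > 0" using pos by simp
  have ec: "\<And>i. (S *v w)$i = mu * w$i" using eig by simp
  have "S$c$j * w$j > 0" using Scj wj' by simp
  hence "mu * w$c > 0" using row[of c j] ec[of c] by linarith
  hence wc: "w$c > 0" using mupos by (simp add: zero_less_mult_iff)
  have wpos: "\<forall>i. w$i > 0"
  proof
    fix i
    have "S$i$c * w$c > 0" using pos wc by simp
    hence "mu * w$i > 0" using row[of i c] ec[of i] by linarith
    thus "w$i > 0" using mupos by (simp add: zero_less_mult_iff)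
  qed
  have iseig: "is_eigenvalue S mu" unfolding is_eigenvalue_def using w0 eig by blast
  have maxe: "\<forall>mu'. is_eigenvalue S mu' \<longrightarrow> mu' \<le> mu"
  proof (intro allI impI)
    fix mu' assume "is_eigenvalue S mu'"
    then obtain v where v: "v \<noteq> 0" "S *v v = mu' *\<^sub>R v" unfolding is_eigenvalue_def by blast
    have "v \<bullet> (S *v v) = mu' * (v \<bullet> v)" using v by simp
    hence "mu' * (v \<bullet> v) \<le> mu * (v \<bullet> v)" using R by metis
    moreover have "v \<bullet> v > 0" using v by simp
    ultimately show "mu' \<le> mu" by simp
  qed
  show ?thesis using iseig maxe mupos eig wpos by blast
qed



lemma Mv_comp:
  fixes P :: "real^'n^'n"
  shows "((diag_mat (\<chi> s. d s) - P) *v x)$i = d i * x$i - (\<Sum>j\<in>UNIV. P$i$j * x$j)"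
  by (simp add: matrix_vector_mult_def diag_mat_def left_diff_distrib sum_subtractf
      if_distrib[of "\<lambda>a. a * _"] cong: if_cong)

lemma exists_max_idx:
  fixes f :: "'n::finite \<Rightarrow> real"
  shows "\<exists>i. \<forall>j. f j \<le> f i"
proof -
  have "Max (range f) \<in> range f" by (rule Max_in) auto
  then obtain i where "f i = Max (range f)" by (metis imageE)
  moreover have "\<forall>j. f j \<le> Max (range f)" by (simp add: Max_ge)
  ultimately show ?thesis by metis
qed

lemma Minj:
  fixes P :: "real^'n^'n"
  assumes dom: "\<forall>i. d i > (\<Sum>j\<in>UNIV. P$i$j)"
    and Pnn: "\<forall>i j. P$i$j \<ge> 0"
    and Mx: "(diag_mat (\<chi> s. d s) - P) *v x = 0"
  shows "x = 0"
proof -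
  obtain i where imax: "\<forall>j. \<bar>x$j\<bar> \<le> \<bar>x$i\<bar>" using exists_max_idx[of "\<lambda>j. \<bar>x$j\<bar>"] by blast
  have eq: "d i * x$i = (\<Sum>j\<in>UNIV. P$i$j * x$j)"
    using arg_cong[OF Mx, of "\<lambda>v. v$i"] by (simp add: Mv_comp)
  have rs: "(\<Sum>j\<in>UNIV. P$i$j) \<ge> 0" by (rule sum_nonneg) (use Pnn in auto)
  hence dp: "d i > 0" using dom by (meson le_less_trans)
  have "d i * \<bar>x$i\<bar> = \<bar>\<Sum>j\<in>UNIV. P$i$j * x$j\<bar>" using eq dp by (metis abs_mult abs_of_pos)
  also have "\<dots> \<le> (\<Sum>j\<in>UNIV. \<bar>P$i$j * x$j\<bar>)" by (rule sum_abs)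
  also have "\<dots> \<le> (\<Sum>j\<in>UNIV. P$i$j * \<bar>x$i\<bar>)"
    by (rule sum_mono) (use Pnn imax in \<open>auto simp: abs_mult intro: mult_left_mono\<close>)
  also have "\<dots> = (\<Sum>j\<in>UNIV. P$i$j) * \<bar>x$i\<bar>" by (simp add: sum_distrib_right)
  finally have "(d i - (\<Sum>j\<in>UNIV. P$i$j)) * \<bar>x$i\<bar> \<le> 0" by (simp add: algebra_simps)
  moreover have "d i - (\<Sum>j\<in>UNIV. P$i$j) > 0" using dom by simp
  ultimately have "\<bar>x$i\<bar> \<le> 0" by (simp add: mult_le_0_iff)
  hence "\<forall>j. x$j = 0" using imax by (metis abs_le_zero_iff order_trans)
  thus ?thesis by (simp add: vec_eq_iff)
qed

lemma Mnonneg: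
  fixes P :: "real^'n^'n"
  assumes dom: "\<forall>i. d i > (\<Sum>j\<in>UNIV. P$i$j)"
    and Pnn: "\<forall>i j. P$i$j \<ge> 0"
    and Mx: "(diag_mat (\<chi> s. d s) - P) *v z = b"
    and bnn: "\<forall>i. b$i \<ge> 0"
  shows "\<forall>j. z$j \<ge> 0"
proof -
  obtain i where imin: "\<forall>j. - z$j \<le> - z$i" using exists_max_idx[of "\<lambda>j. - z$j"] by blast
  have eq: "d i * z$i - (\<Sum>j\<in>UNIV. P$i$j * z$j) = b$i"
    using arg_cong[OF Mx, of "\<lambda>v. v$i"] by (simp add: Mv_comp)
  have "(\<Sum>j\<in>UNIV. P$i$j) * z$i = (\<Sum>j\<in>UNIV. P$i$j * z$i)" by (simp add: sum_distrib_right)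
  also have "\<dots> \<le> (\<Sum>j\<in>UNIV. P$i$j * z$j)"
    by (rule sum_mono) (use Pnn imin in \<open>auto intro: mult_left_mono\<close>)
  finally have "(d i - (\<Sum>j\<in>UNIV. P$i$j)) * z$i \<ge> 0" using eq bnn[rule_format, of i]
    by (simp add: algebra_simps)
  moreover have "d i - (\<Sum>j\<in>UNIV. P$i$j) > 0" using dom by simp
  ultimately have "z$i \<ge> 0" by (simp add: zero_le_mult_iff)
  thus ?thesis using imin by (metis neg_le_iff_le order_trans)
qed

lemma Minv:
  fixes P :: "real^'n^'n"
  assumes dom: "\<forall>i. d i > (\<Sum>j\<in>UNIV. P$i$j)"
    and Pnn: "\<forall>i j. P$i$j \<ge> 0"
  shows "(diag_mat (\<chi> s. d s) - P) ** matrix_inv (diag_mat (\<chi> s. d s) - P) = mat 1"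
proof -
  let ?M = "diag_mat (\<chi> s. d s) - P"
  have "inj ((*v) ?M)"
    unfolding linear_injective_0[OF matrix_vector_mul_linear]
    using Minj[OF dom Pnn] by blast
  then obtain B where B: "B ** ?M = mat 1" using matrix_left_invertible_injective by blast
  hence "?M ** B = mat 1" using matrix_left_right_inverse by blast
  hence ex: "\<exists>A'. ?M ** A' = mat 1 \<and> A' ** ?M = mat 1" using B by blast
  show ?thesis unfolding matrix_inv_def using someI_ex[OF ex] by blast
qed



theorem propositionC2:
  fixes SN :: "'n::finite set"
    and r :: "'n \<Rightarrow> real"
    and lam :: real
    and P :: "real ^ 'n ^ 'n"
    and s0 :: 'n
  assumes r_neg: "\<forall>s\<in>SN. r s < 0"
    and lam_pos: "lam > 0"
    and P_nonneg: "\<forall>s s'. P $ s $ s' \<ge> 0"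
    and P_rows_nonterm: "\<forall>s\<in>SN. (\<Sum>s'\<in>UNIV. P $ s $ s') = 1"
    and P_rows_term: "\<forall>s. s \<notin> SN \<longrightarrow> (\<forall>s'. P $ s $ s' = 0)"
    and reach: "\<forall>s. \<exists>(u :: nat \<Rightarrow> 'n) k. u 0 = s0 \<and> u k = s \<and>
                       (\<Prod>t<k. P $ u t $ u (Suc t)) > 0"
  shows "\<exists>mu v. is_eigenvalue (sym_part (default_rep r lam P)) mu
            \<and> (\<forall>mu'. is_eigenvalue (sym_part (default_rep r lam P)) mu' \<longrightarrow> mu' \<le> mu)
            \<and> mu > 0
            \<and> sym_part (default_rep r lam P) *v v = mu *\<^sub>R v
            \<and> (\<forall>i. v $ i > 0)"
proof -
  define d where "d = (\<lambda>s. exp (- r s / lam))"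
  have dpos: "\<forall>i. d i > 0" unfolding d_def by simp
  have dom: "\<forall>i. d i > (\<Sum>j\<in>UNIV. P$i$j)"
  proof
    fix i
    show "d i > (\<Sum>j\<in>UNIV. P$i$j)"
    proof (cases "i \<in> SN")
      case True
      hence "- r i / lam > 0" using r_neg lam_pos by (simp add: divide_neg_pos)
      hence "d i > 1" unfolding d_def by simp
      thus ?thesis using P_rows_nonterm True by simp
    next
      case False
      thus ?thesis using P_rows_term dpos by simp
    qed
  qed
  define M where "M = diag_mat (\<chi> s. d s) - P"
  define Z where "Z = default_rep r lam P"
  have Zdef: "Z = matrix_inv M" unfolding Z_def M_def default_rep_def d_def by simp
  have MZ: "M ** Z = mat 1" unfolding Zdef M_def by (rule Minv[OF dom P_nonneg])
  have col: "\<And>i j. Z$i$j = (Z *v axis j 1)$i"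
    by (simp add: matrix_vector_mult_basis column_def)
  have Mcol: "\<And>j. M *v (Z *v axis j 1) = axis j 1"
    by (simp add: matrix_vector_mul_assoc MZ)
  have rowz: "\<And>j a. d a * (Z *v axis j 1)$a = (axis j 1 :: real^'n)$a + (\<Sum>k\<in>UNIV. P$a$k * (Z *v axis j 1)$k)"
  proof -
    fix j a
    have "(M *v (Z *v axis j 1))$a = (axis j 1 :: real^'n)$a" using Mcol by simp
    thus "d a * (Z *v axis j 1)$a = (axis j 1 :: real^'n)$a + (\<Sum>k\<in>UNIV. P$a$k * (Z *v axis j 1)$k)"
      unfolding M_def Mv_comp by simp
  qed
  have Znn: "\<forall>i j. Z$i$j \<ge> 0"
  proof (intro allI)
    fix i j
    have "\<forall>l. (Z *v axis j 1)$l \<ge> 0"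
      by (rule Mnonneg[OF dom P_nonneg, of _ "axis j 1"]) (use Mcol in \<open>auto simp: M_def axis_def\<close>)
    thus "Z$i$j \<ge> 0" using col by simp
  qed
  have Zpos: "\<forall>s. Z$s0$s > 0"
  proof
    fix s
    define z where "z = Z *v axis s 1"
    have znn: "\<forall>l. z$l \<ge> 0" using Znn col unfolding z_def by metis
    have step: "\<And>a c. P$a$c > 0 \<Longrightarrow> z$c > 0 \<Longrightarrow> z$a > 0"
    proof -
      fix a c assume pc: "P$a$c > 0" and zc: "z$c > 0"
      have "P$a$c * z$c \<le> (\<Sum>k\<in>UNIV. P$a$k * z$k)"
        by (rule member_le_sum[where f="\<lambda>k. P$a$k * z$k"]) (use P_nonneg znn in auto)
      moreover have "P$a$c * z$c > 0" using pc zc by simp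
      moreover have "(axis s 1 :: real^'n)$a \<ge> 0" by (simp add: axis_def)
      ultimately have "d a * z$a > 0" using rowz[where j=s and a=a] unfolding z_def by linarith
      thus "z$a > 0" using dpos[rule_format, of a] by (simp add: zero_less_mult_iff)
    qed
    have zs: "z$s > 0"
    proof -
      have "(\<Sum>k\<in>UNIV. P$s$k * z$k) \<ge> 0" by (rule sum_nonneg) (use P_nonneg znn in auto)
      hence "d s * z$s \<ge> 1" using rowz[of s s] unfolding z_def by (simp add: axis_def)
      hence "d s * z$s > 0" by linarith
      thus "z$s > 0" using dpos[rule_format, of s] by (simp add: zero_less_mult_iff)
    qed
    obtain u k where u: "u 0 = s0" "u k = s" "(\<Prod>t<k. P $ u t $ u (Suc t)) > 0"
      using reach by blast
    have edge: "\<And>t. t < k \<Longrightarrow> P $ u t $ u (Suc t) > 0"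
    proof -
      fix t assume "t < k"
      hence "P $ u t $ u (Suc t) \<noteq> 0" using u(3) by (metis finite_lessThan lessThan_iff less_irrefl prod_zero_iff)
      thus "P $ u t $ u (Suc t) > 0" using P_nonneg by (simp add: order_le_neq_trans)
    qed
    have "\<forall>m. m \<le> k \<longrightarrow> z$(u (k - m)) > 0"
    proof (intro allI)
      fix m show "m \<le> k \<longrightarrow> z$(u (k - m)) > 0"
      proof (induction m)
        case 0 then show ?case using zs u(2) by simp
      next
        case (Suc m)
        show ?case
        proof
          assume mk: "Suc m \<le> k"
          hence "z$(u (k - m)) > 0" using Suc by simp
          moreover have "Suc (k - Suc m) = k - m" using mk by simp
          moreover have "P $ u (k - Suc m) $ u (Suc (k - Suc m)) > 0" using edge mk by simp
          ultimately show "z$(u (k - Suc m)) > 0" using step by metis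
        qed
      qed
    qed
    hence "z$(u 0) > 0" by (metis diff_self_eq_0 order_refl)
    thus "Z$s0$s > 0" using col u(1) unfolding z_def by simp
  qed
  define S where "S = sym_part Z"
  have Sij: "\<And>i j. S$i$j = (Z$i$j + Z$j$i) / 2"
    unfolding S_def sym_part_def by (simp add: transpose_def)
  have sym: "transpose S = S" by (simp add: vec_eq_iff transpose_def Sij)
  have Snn: "\<forall>i j. S$i$j \<ge> 0"
  proof (intro allI)
    fix i j show "S$i$j \<ge> 0" unfolding Sij using Znn[rule_format, of i j] Znn[rule_format, of j i] by simp
  qed
  have Spos: "\<forall>i. S$i$s0 > 0"
  proof
    fix i show "S$i$s0 > 0" unfolding Sij using Znn[rule_format, of i s0] Zpos[rule_format, of i] by simp
  qed
  show ?thesis using perron_sym[OF sym Snn Spos] unfolding S_def Z_def by blast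
qed

end
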